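(* Let $d\leq n$ be natural numbers. Suppose $A\subseteq 2^{[n]}$ satisfies $\mathsf{VC\text{-}dim}(\{S\triangle T \mid S,T\in A\})\leq d$. Then \[ |A| \leq 2\binom{n}{\leq \lfloor d/2\rfloor}. \]
   Context: $[n]=\{1,\dots,n\}$ and $2^{[n]}$ is the family of all subsets of $[n]$; $\triangle$ denotes symmetric difference. For a family $B\subseteq 2^{[n]}$, $\mathsf{VC\text{-}dim}(B)$ is the size of the largest $Y\subseteq[n]$ such that $\{S\cap Y \mid S\in B\}=2^{Y}$. The notation $\binom{n}{\leq k}$ means $\sum_{i=0}^{k}\binom{n}{i}$. *)

theory Defs
  imports Main
begin

definition shatters :: "nat set set \<Rightarrow> nat set \<Rightarrow> bool" where
  "shatters B Y \<longleftrightarrow> {S \<inter> Y | S. S \<in> B} = Pow Y"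

definition vc_dim :: "nat \<Rightarrow> nat set set \<Rightarrow> nat" where
  "vc_dim n B = Max {card Y | Y. Y \<subseteq> {1..n} \<and> shatters B Y}"

definition symdiff :: "'a set \<Rightarrow> 'a set \<Rightarrow> 'a set" where
  "symdiff S T = (S - T) \<union> (T - S)"

definition binom_le :: "nat \<Rightarrow> nat \<Rightarrow> nat" where
  "binom_le n k = (\<Sum>i\<le>k. n choose i)"

end

theory Submission
  imports Defs Complex_Main "HOL-Library.Function_Algebras" begin

lemma sum_fun_apply: "(\<Sum>S\<in>F. g S) x = (\<Sum>S\<in>F. (g S x :: real))"
proof (cases "finite F")
  case True then show ?thesis by (induction F rule: finite_induct) (auto simp: plus_fun_def zero_fun_def)
next
  case False then show ?thesis by (simp add: zero_fun_def)
qed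

interpretation fvs: vector_space "\<lambda>(c::real) (f::nat set \<Rightarrow> real). (\<lambda>x. c * f x)"
  by unfold_locales (auto simp: fun_eq_iff algebra_simps plus_fun_def)

lemma alt_sum: "finite X \<Longrightarrow> (\<Sum>T\<in>Pow X. (-1::real)^card T) = (if X = {} then 1 else 0)"
proof (induction X rule: finite_induct)
  case empty then show ?case by simp
next
  case (insert x F)
  have inj: "inj_on (insert x) (Pow F)" using insert(2) by (auto simp: inj_on_def)
  have d: "Pow F \<inter> insert x ` Pow F = {}" using insert(2) by auto
  have "(\<Sum>T\<in>Pow (insert x F). (-1::real)^card T) = (\<Sum>T\<in>Pow F. (-1)^card T) + (\<Sum>T\<in>insert x ` Pow F. (-1)^card T)"
    by (simp add: Pow_insert sum.union_disjoint d insert(1))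
  also have "(\<Sum>T\<in>insert x ` Pow F. (-1::real)^card T) = (\<Sum>T\<in>Pow F. (-1)^card (insert x T))"
    by (simp add: sum.reindex[OF inj])
  also have "\<dots> = (\<Sum>T\<in>Pow F. - ((-1)^card T))"
  proof (rule sum.cong)
    fix T assume "T \<in> Pow F"
    then have "finite T" "x \<notin> T" using insert(1,2) finite_subset by auto
    then show "(-1::real)^card (insert x T) = - ((-1)^card T)" by simp
  qed simp
  finally show ?case by (simp add: sum_negf)
qed

lemma alt_sum2:
  assumes "finite X"
  shows "(\<Sum>T\<in>Pow X. (-1::real)^card T * (if S \<inter> T = {} then 1 else 0)) = (if X \<subseteq> S then 1 else 0)"
proof -
  have "(\<Sum>T\<in>Pow X. (-1::real)^card T * (if S \<inter> T = {} then 1 else 0)) = (\<Sum>T\<in>{T\<in>Pow X. S \<inter> T = {}}. (-1::real)^card T)"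
    by (simp add: sum.inter_filter[symmetric] assms if_distrib cong: if_cong)
  also have "{T\<in>Pow X. S \<inter> T = {}} = Pow (X - S)" by auto
  also have "(\<Sum>T\<in>Pow (X - S). (-1::real)^card T) = (if X - S = {} then 1 else 0)"
    using assms by (simp add: alt_sum)
  finally show ?thesis by auto
qed

lemma la:
  fixes A C :: "nat set set"
  assumes finA: "finite A" and dc: "\<forall>S\<in>A. \<forall>T. T \<subseteq> S \<longrightarrow> T \<in> A" and CA: "C \<subseteq> A"
    and inter: "\<forall>S\<in>C. \<forall>T\<in>C. S \<inter> T \<noteq> {}" and fins: "\<forall>S\<in>A. finite S"
  shows "card C \<le> card (A - C)"
proof -
  define r where "r S = (\<lambda>T. if T \<in> A \<and> S \<inter> T = {} then (1::real) else 0)" for S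
  define e where "e T = (\<lambda>X. if X = T then (1::real) else 0)" for T :: "nat set"
  have finC: "finite C" using finA CA finite_subset by auto
  have key: "\<forall>S\<in>C. c S = 0" if z: "\<And>X. (\<Sum>S\<in>C. c S * r S X) = 0" for c
  proof (rule ccontr)
    assume nz: "\<not> (\<forall>S\<in>C. c S = 0)"
    define N where "N = {S\<in>C. c S \<noteq> 0}"
    have finN: "finite N" "N \<noteq> {}" using finC nz by (auto simp: N_def)
    have "Max (card ` N) \<in> card ` N" using finN by (intro Max_in) auto
    then obtain S0 where S0N: "S0 \<in> N" "card S0 = Max (card ` N)" by auto
    have S0: "S0 \<in> N" "\<forall>S\<in>N. card S \<le> card S0"
      using S0N finN by auto
    have S0C: "S0 \<in> C" "c S0 \<noteq> 0" using S0 by (auto simp: N_def)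
    have finS0: "finite S0" using S0C CA fins by auto
    have maxi: "S = S0" if "S \<in> C" "S0 \<subseteq> S" "c S \<noteq> 0" for S
    proof -
      have "S \<in> N" using that by (auto simp: N_def)
      then have "card S \<le> card S0" using S0 by auto
      moreover have "finite S" using that CA fins by auto
      ultimately show ?thesis using that(2) card_subset_eq by (metis antisym card_mono)
    qed
    have "0 = (\<Sum>T\<in>Pow S0. (-1::real)^card T * (\<Sum>S\<in>C. c S * r S T))" by (simp add: z)
    also have "\<dots> = (\<Sum>S\<in>C. c S * (\<Sum>T\<in>Pow S0. (-1::real)^card T * r S T))"
      by (simp add: sum_distrib_left sum.swap[of _ "Pow S0"] mult_ac)
    also have "\<dots> = (\<Sum>S\<in>C. c S * (if S0 \<subseteq> S then 1 else 0))"
    proof (rule sum.cong)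
      fix S assume "S \<in> C"
      have "(\<Sum>T\<in>Pow S0. (-1::real)^card T * r S T) = (\<Sum>T\<in>Pow S0. (-1::real)^card T * (if S \<inter> T = {} then 1 else 0))"
      proof (rule sum.cong)
        fix T assume "T \<in> Pow S0"
        then have "T \<in> A" using dc S0C CA by auto
        then show "(-1::real)^card T * r S T = (-1::real)^card T * (if S \<inter> T = {} then 1 else 0)" by (simp add: r_def)
      qed simp
      also have "\<dots> = (if S0 \<subseteq> S then 1 else 0)" using alt_sum2[OF finS0] by simp
      finally show "c S * (\<Sum>T\<in>Pow S0. (-1::real)^card T * r S T) = c S * (if S0 \<subseteq> S then 1 else 0)" by simp
    qed simp
    also have "\<dots> = (\<Sum>S\<in>C. if S = S0 then c S else 0)"
      by (rule sum.cong) (use maxi in auto)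
    also have "\<dots> = c S0" using S0C finC by simp
    finally show False using S0C by simp
  qed
  have inj: "inj_on r C"
  proof (rule inj_onI)
    fix S T assume ST: "S \<in> C" "T \<in> C" "r S = r T"
    show "S = T"
    proof (rule ccontr)
      assume "S \<noteq> T"
      then obtain x where "x \<in> S - T \<or> x \<in> T - S" by blast
      then show False
      proof
        assume x: "x \<in> S - T"
        have "{x} \<in> A" using x ST CA dc by auto
        then have "r S {x} \<noteq> r T {x}" using x by (simp add: r_def)
        then show False using ST by simp
      next
        assume x: "x \<in> T - S"
        have "{x} \<in> A" using x ST CA dc by auto
        then have "r S {x} \<noteq> r T {x}" using x by (simp add: r_def)
        then show False using ST by simp
      qed
    qed
  qed
  have ind: "fvs.independent (r ` C)"
  proof (rule fvs.independent_if_scalars_zero)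
    show "finite (r ` C)" using finC by simp
  next
    fix f x assume sf: "(\<Sum>x\<in>r ` C. (\<lambda>y. f x * x y)) = 0" and xr: "x \<in> r ` C"
    have "\<forall>S\<in>C. (f \<circ> r) S = 0"
    proof (rule key)
      fix X
      have "(\<Sum>S\<in>C. (f \<circ> r) S * r S X) = (\<Sum>x\<in>r ` C. (\<lambda>y. f x * x y)) X"
        by (simp add: sum_fun_apply sum.reindex[OF inj])
      then show "(\<Sum>S\<in>C. (f \<circ> r) S * r S X) = 0" using sf by simp
    qed
    then show "f x = 0" using xr by auto
  qed
  have sp: "r ` C \<subseteq> fvs.span (e ` (A - C))"
  proof
    fix y assume "y \<in> r ` C"
    then obtain S where S: "S \<in> C" "y = r S" by auto
    let ?F = "{T \<in> A - C. S \<inter> T = {}}"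
    have finF: "finite ?F" using finA by auto
    have "r S = (\<Sum>T\<in>?F. e T)"
    proof
      fix X
      have "(\<Sum>T\<in>?F. e T) X = (\<Sum>T\<in>?F. if X = T then 1 else 0)"
        by (simp add: sum_fun_apply e_def)
      also have "\<dots> = (if X \<in> ?F then 1 else 0)" using finF by (simp add: sum.delta)
      also have "\<dots> = r S X" using S inter by (auto simp: r_def)
      finally show "r S X = (\<Sum>T\<in>?F. e T) X" by simp
    qed
    also have "\<dots> \<in> fvs.span (e ` (A - C))"
      by (rule fvs.span_sum) (auto intro: fvs.span_base)
    finally show "y \<in> fvs.span (e ` (A - C))" using S by simp
  qed
  have "card (r ` C) \<le> card (e ` (A - C))"
    using fvs.independent_span_bound[OF _ ind sp] finA by auto
  also have "\<dots> \<le> card (A - C)" using finA by (simp add: card_image_le)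
  finally show ?thesis using card_image[OF inj] by simp
qed


definition DF :: "nat set set \<Rightarrow> nat set set" where
  "DF A = {symdiff S T | S T. S \<in> A \<and> T \<in> A}"

definition compr :: "nat \<Rightarrow> nat set set \<Rightarrow> nat set \<Rightarrow> nat set" where
  "compr i A S = (if i \<in> S \<and> S - {i} \<notin> A then S - {i} else S)"

lemma shatters_iff: "shatters B Y \<longleftrightarrow> (\<forall>P. P \<subseteq> Y \<longrightarrow> (\<exists>X\<in>B. X \<inter> Y = P))"

proof
  assume "shatters B Y"
  then have e: "{S \<inter> Y | S. S \<in> B} = Pow Y" by (simp add: shatters_def)
  show "\<forall>P. P \<subseteq> Y \<longrightarrow> (\<exists>X\<in>B. X \<inter> Y = P)"
  proof (intro allI impI)
    fix P assume "P \<subseteq> Y"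
    then have "P \<in> {S \<inter> Y | S. S \<in> B}" using e by simp
    then show "\<exists>X\<in>B. X \<inter> Y = P" by blast
  qed
next
  assume h: "\<forall>P. P \<subseteq> Y \<longrightarrow> (\<exists>X\<in>B. X \<inter> Y = P)"
  have "Pow Y \<subseteq> {S \<inter> Y | S. S \<in> B}"
  proof
    fix P assume "P \<in> Pow Y"
    then obtain X where "X \<in> B" "X \<inter> Y = P" using h by blast
    then show "P \<in> {S \<inter> Y | S. S \<in> B}" by blast
  qed
  moreover have "{S \<inter> Y | S. S \<in> B} \<subseteq> Pow Y" by blast
  ultimately show "shatters B Y" unfolding shatters_def by blast
qed

lemma symdiff_inter: "symdiff S T \<inter> Y = symdiff (S \<inter> Y) (T \<inter> Y)"
  by (auto simp: symdiff_def)

lemma symdiff_comm: "symdiff S T = symdiff T S"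
  by (auto simp: symdiff_def)

lemma core:
  assumes S: "S \<in> A" and T: "T \<in> A" and iS: "i \<in> compr i A S" and iT: "i \<notin> compr i A T"
    and iY: "i \<in> Y" and PY: "P \<subseteq> Y"
    and eq: "symdiff (compr i A S) (compr i A T) \<inter> Y = insert i P"
  shows "\<exists>X\<in>DF A. X \<inter> Y = P"
proof -
  have S1: "compr i A S = S" "i \<in> S" "S - {i} \<in> A" using iS by (auto simp: compr_def split: if_splits)
  have T1: "compr i A T = T - {i}" using iT by (auto simp: compr_def split: if_splits)
  have H: "\<And>x. x \<in> Y \<Longrightarrow> x \<noteq> i \<Longrightarrow> (x \<in> P \<longleftrightarrow> (x \<in> S \<longleftrightarrow> x \<notin> T))"
  proof -
    fix x assume "x \<in> Y" "x \<noteq> i"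
    have "x \<in> symdiff (compr i A S) (compr i A T) \<inter> Y \<longleftrightarrow> x \<in> insert i P" using eq by simp
    then show "(x \<in> P \<longleftrightarrow> (x \<in> S \<longleftrightarrow> x \<notin> T))" using \<open>x \<in> Y\<close> \<open>x \<noteq> i\<close> S1 T1
      by (auto simp: symdiff_def)
  qed
  have ok: "symdiff U T \<inter> Y = P" if "U \<inter> (Y - {i}) = S \<inter> (Y - {i})" "(i \<in> P \<longleftrightarrow> (i \<in> U \<longleftrightarrow> i \<notin> T))" for U
  proof (rule set_eqI)
    fix x
    show "x \<in> symdiff U T \<inter> Y \<longleftrightarrow> x \<in> P"
    proof (cases "x = i")
      case True then show ?thesis using that iY by (auto simp: symdiff_def)
    next
      case False
      then have "x \<in> Y \<Longrightarrow> (x \<in> U \<longleftrightarrow> x \<in> S)" using that(1) by blast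
      then show ?thesis using H[of x] False PY by (auto simp: symdiff_def)
    qed
  qed
  show ?thesis
  proof (cases "(i \<in> P \<longleftrightarrow> (i \<in> S \<longleftrightarrow> i \<notin> T))")
    case True
    have "symdiff S T \<in> DF A" unfolding DF_def using S T by blast
    moreover have "symdiff S T \<inter> Y = P" by (rule ok) (use True in auto)
    ultimately show ?thesis by blast
  next
    case False
    have "symdiff (S - {i}) T \<in> DF A" unfolding DF_def using S1 T by blast
    moreover have "symdiff (S - {i}) T \<inter> Y = P" by (rule ok) (use False S1 in auto)
    ultimately show ?thesis by blast
  qed
qed

lemma comp_shatter:
  assumes "shatters (DF (compr i A ` A)) Y"
  shows "shatters (DF A) Y"
  unfolding shatters_iff
proof (intro allI impI)
  fix P assume PY: "P \<subseteq> Y"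
  show "\<exists>X\<in>DF A. X \<inter> Y = P"
  proof (cases "i \<in> Y")
    case False
    obtain X where X: "X \<in> DF (compr i A ` A)" "X \<inter> Y = P" using assms PY unfolding shatters_iff by blast
    then obtain S T where ST: "S \<in> A" "T \<in> A" "X = symdiff (compr i A S) (compr i A T)"
      by (auto simp: DF_def)
    have c: "compr i A U \<inter> Y = U \<inter> Y" for U using False by (auto simp: compr_def)
    have "symdiff S T \<inter> Y = P" using X(2) ST(3) by (simp add: symdiff_inter c)
    moreover have "symdiff S T \<in> DF A" unfolding DF_def using ST by blast
    ultimately show ?thesis by blast
  next
    case True
    have "insert i P \<subseteq> Y" using True PY by auto
    then obtain X where X: "X \<in> DF (compr i A ` A)" "X \<inter> Y = insert i P" using assms unfolding shatters_iff by blast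
    then obtain S T where ST: "S \<in> A" "T \<in> A" "X = symdiff (compr i A S) (compr i A T)"
      by (auto simp: DF_def)
    have "i \<in> X" using X(2) by auto
    then have "(i \<in> compr i A S \<and> i \<notin> compr i A T) \<or> (i \<in> compr i A T \<and> i \<notin> compr i A S)"
      using ST(3) by (auto simp: symdiff_def)
    then show ?thesis
    proof
      assume a: "i \<in> compr i A S \<and> i \<notin> compr i A T"
      show ?thesis using core[OF ST(1,2) _ _ True PY] a X(2) ST(3) by blast
    next
      assume a: "i \<in> compr i A T \<and> i \<notin> compr i A S"
      show ?thesis using core[OF ST(2,1) _ _ True PY] a X(2) ST(3) symdiff_comm by metis
    qed
  qed
qed

lemma dc_aux:
  assumes cl: "\<forall>S\<in>A. \<forall>i\<in>S. S - {i} \<in> A"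
  shows "finite F \<Longrightarrow> S \<in> A \<Longrightarrow> S - F \<in> A"
proof (induction F rule: finite_induct)
  case empty then show ?case by simp
next
  case (insert x F)
  show ?case
  proof (cases "x \<in> S - F")
    case True
    then have "(S - F) - {x} \<in> A" using cl insert by blast
    moreover have "S - insert x F = (S - F) - {x}" by auto
    ultimately show ?thesis by simp
  next
    case False
    then have "S - insert x F = S - F" by auto
    then show ?thesis using insert by simp
  qed
qed


lemma card_small:
  assumes "B \<subseteq> Pow {1..n}" "\<forall>S\<in>B. card S \<le> k"
  shows "card B \<le> binom_le n k"
proof -
  have "B \<subseteq> (\<Union>i\<in>{..k}. {X. X \<subseteq> {1..n} \<and> card X = i})" using assms by auto
  moreover have "finite (\<Union>i\<in>{..k}. {X. X \<subseteq> {1..n} \<and> card X = i})" by auto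
  ultimately have "card B \<le> card (\<Union>i\<in>{..k}. {X. X \<subseteq> {1..n} \<and> card X = i})" by (rule card_mono[rotated])
  also have "\<dots> \<le> (\<Sum>i\<le>k. card {X. X \<subseteq> {1..n} \<and> card X = i})" by (rule card_UN_le) simp
  also have "\<dots> = (\<Sum>i\<le>k. n choose i)" by (simp add: n_subsets)
  finally show ?thesis by (simp add: binom_le_def)
qed

lemma main:
  "finite A \<Longrightarrow> A \<subseteq> Pow {1..n} \<Longrightarrow> (\<forall>Y. Y \<subseteq> {1..n} \<longrightarrow> shatters (DF A) Y \<longrightarrow> card Y \<le> d)
   \<Longrightarrow> card A \<le> 2 * binom_le n (d div 2)"
proof (induction "\<Sum>S\<in>A. card S" arbitrary: A rule: less_induct)
  case less
  have finS: "finite S" if "S \<in> A" for S using that less.prems(2) by (meson PowD finite_atLeastAtMost finite_subset subsetD)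
  show ?case
  proof (cases "\<exists>S\<in>A. \<exists>i\<in>S. S - {i} \<notin> A")
    case True
    then obtain S0 i where S0: "S0 \<in> A" "i \<in> S0" "S0 - {i} \<notin> A" by blast
    define A' where "A' = compr i A ` A"
    have inj: "inj_on (compr i A) A"
    proof (rule inj_onI)
      fix S T assume ST: "S \<in> A" "T \<in> A" "compr i A S = compr i A T"
      have cS: "compr i A S = (if i \<in> S \<and> S - {i} \<notin> A then S - {i} else S)" by (simp add: compr_def)
      have cT: "compr i A T = (if i \<in> T \<and> T - {i} \<notin> A then T - {i} else T)" by (simp add: compr_def)
      show "S = T"
      proof (cases "i \<in> S \<and> S - {i} \<notin> A"; cases "i \<in> T \<and> T - {i} \<notin> A")
        assume a: "i \<in> S \<and> S - {i} \<notin> A" "i \<in> T \<and> T - {i} \<notin> A"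
        have e1: "compr i A S = S - {i}" unfolding compr_def using a(1) by (rule if_P)
        have e2: "compr i A T = T - {i}" unfolding compr_def using a(2) by (rule if_P)
        have "S - {i} = T - {i}" using ST(3) unfolding e1 e2 .
        then show ?thesis using a by (metis insert_Diff)
      next
        assume a: "i \<in> S \<and> S - {i} \<notin> A" "\<not> (i \<in> T \<and> T - {i} \<notin> A)"
        have e1: "compr i A S = S - {i}" unfolding compr_def using a(1) by (rule if_P)
        have e2: "compr i A T = T" unfolding compr_def using a(2) by (rule if_not_P)
        have "S - {i} = T" using ST(3) unfolding e1 e2 .
        then show ?thesis using a ST(2) by simp
      next
        assume a: "\<not> (i \<in> S \<and> S - {i} \<notin> A)" "i \<in> T \<and> T - {i} \<notin> A"
        have e1: "compr i A S = S" unfolding compr_def using a(1) by (rule if_not_P)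
        have e2: "compr i A T = T - {i}" unfolding compr_def using a(2) by (rule if_P)
        have "S = T - {i}" using ST(3) unfolding e1 e2 .
        then show ?thesis using a ST(1) by simp
      next
        assume a: "\<not> (i \<in> S \<and> S - {i} \<notin> A)" "\<not> (i \<in> T \<and> T - {i} \<notin> A)"
        have e1: "compr i A S = S" unfolding compr_def using a(1) by (rule if_not_P)
        have e2: "compr i A T = T" unfolding compr_def using a(2) by (rule if_not_P)
        show ?thesis using ST(3) unfolding e1 e2 .
      qed
    qed
    have sub: "compr i A S \<subseteq> S" for S by (auto simp: compr_def)
    have cardA': "card A' = card A" unfolding A'_def using card_image[OF inj] .
    have finA': "finite A'" unfolding A'_def using less.prems(1) by simp
    have powA': "A' \<subseteq> Pow {1..n}" unfolding A'_def using less.prems(2) sub by blast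
    have shA': "\<forall>Y. Y \<subseteq> {1..n} \<longrightarrow> shatters (DF A') Y \<longrightarrow> card Y \<le> d"
      using less.prems(3) comp_shatter unfolding A'_def by blast
    have "(\<Sum>S\<in>A'. card S) = (\<Sum>S\<in>A. card (compr i A S))"
      unfolding A'_def by (simp add: sum.reindex[OF inj])
    also have "\<dots> < (\<Sum>S\<in>A. card S)"
    proof (rule sum_strict_mono_ex1)
      show "finite A" by fact
      show "\<forall>x\<in>A. card (compr i A x) \<le> card x" using sub finS by (simp add: card_mono)
      have "compr i A S0 = S0 - {i}" using S0 by (simp add: compr_def)
      then have "card (compr i A S0) < card S0" using card_Diff1_less[OF finS[OF S0(1)] S0(2)] by simp
      then show "\<exists>a\<in>A. card (compr i A a) < card a" using S0 by blast
    qed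
    finally have "card A' \<le> 2 * binom_le n (d div 2)"
      using less.hyps finA' powA' shA' by blast
    then show ?thesis using cardA' by simp
  next
    case False
    then have cl: "\<forall>S\<in>A. \<forall>i\<in>S. S - {i} \<in> A" by blast
    have dc: "\<forall>S\<in>A. \<forall>T. T \<subseteq> S \<longrightarrow> T \<in> A"
    proof (intro ballI allI impI)
      fix S T assume "S \<in> A" "T \<subseteq> S"
      have "S - (S - T) \<in> A" using dc_aux[OF cl _ \<open>S \<in> A\<close>] finS[OF \<open>S \<in> A\<close>] by simp
      moreover have "S - (S - T) = T" using \<open>T \<subseteq> S\<close> by blast
      ultimately show "T \<in> A" by simp
    qed
    have disj: "card S + card T \<le> d" if ST: "S \<in> A" "T \<in> A" "S \<inter> T = {}" for S T
    proof -
      have Y: "S \<union> T \<subseteq> {1..n}" using ST less.prems(2) by blast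
      have "shatters (DF A) (S \<union> T)"
        unfolding shatters_iff
      proof (intro allI impI)
        fix P assume P: "P \<subseteq> S \<union> T"
        have "P \<inter> S \<in> A" "P \<inter> T \<in> A" using dc ST by auto
        then have "symdiff (P \<inter> S) (P \<inter> T) \<in> DF A" unfolding DF_def by blast
        moreover have "symdiff (P \<inter> S) (P \<inter> T) \<inter> (S \<union> T) = P" using P ST(3) by (auto simp: symdiff_def)
        ultimately show "\<exists>X\<in>DF A. X \<inter> (S \<union> T) = P" by blast
      qed
      then have "card (S \<union> T) \<le> d" using less.prems(3) Y by blast
      moreover have "card (S \<union> T) = card S + card T" using finS ST by (simp add: card_Un_disjoint)
      ultimately show ?thesis by simp
    qed
    define k where "k = d div 2"
    define C where "C = {S\<in>A. \<not> card S \<le> k}"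
    have CA: "C \<subseteq> A" by (auto simp: C_def)
    have inter: "\<forall>S\<in>C. \<forall>T\<in>C. S \<inter> T \<noteq> {}"
    proof (intro ballI notI)
      fix S T assume "S \<in> C" "T \<in> C" "S \<inter> T = {}"
      then have "card S + card T \<le> d" using disj by (auto simp: C_def)
      moreover have "d \<le> 2 * k + 1" by (simp add: k_def)
      ultimately show False using \<open>S \<in> C\<close> \<open>T \<in> C\<close> by (auto simp: C_def)
    qed
    have "card C \<le> card (A - C)"
      by (rule la[OF less.prems(1) dc CA inter]) (use finS in blast)
    moreover have "card (A - C) \<le> binom_le n k"
      by (rule card_small) (use less.prems(2) in \<open>auto simp: C_def\<close>)
    moreover have "card A = card C + card (A - C)"
      using card_Diff_subset[OF _ CA] card_mono[OF less.prems(1) CA] less.prems(1) finite_subset[OF CA]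
      by simp
    ultimately show ?thesis by (simp add: k_def)
  qed
qed

theorem theorem1p2:
  fixes n d :: nat and A :: "nat set set"
  assumes "d \<le> n"
    and "A \<subseteq> Pow {1..n}"
    and "vc_dim n {symdiff S T | S T. S \<in> A \<and> T \<in> A} \<le> d"
  shows "card A \<le> 2 * binom_le n (d div 2)"
proof (cases "A = {}")
  case True then show ?thesis by simp
next
  case False
  have finA: "finite A" using assms(2) finite_subset by (metis finite_Pow_iff finite_atLeastAtMost)
  have "card Y \<le> d" if Y: "Y \<subseteq> {1..n}" "shatters (DF A) Y" for Y
  proof -
    let ?K = "{card Y | Y. Y \<subseteq> {1..n} \<and> shatters (DF A) Y}"
    have "?K \<subseteq> card ` Pow {1..n}" by auto
    moreover have "finite (card ` Pow {1..n})" by simp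
    ultimately have "finite ?K" by (rule finite_subset)
    moreover have "card Y \<in> ?K" using Y by blast
    ultimately have "card Y \<le> Max ?K" by (rule Max_ge)
    also have "Max ?K \<le> d" using assms(3) by (simp add: vc_dim_def DF_def)
    finally show ?thesis .
  qed
  then show ?thesis using main[OF finA assms(2)] by blast
qed

end
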